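(* For all $i\ge1$, $$\frac{\lambda_{i+1}}{\lambda_i}\in\left[t'(\phi_i),\,t'(\phi_{i-1})\right].$$
   Context: Let $D=\{c_j\}_{j=0}^d$ be an offspring distribution of a Galton–Watson branching process on an infinite $d$-ary tree, with each non-root node independently holding an answer with probability $1/n$. Let $t(x)=\sum_{j=0}^d c_j x^j(1-\frac1n)^j$, $\phi_0=1$, $\phi_i=t(\phi_{i-1})$ for $i\ge1$ (the probability that no active node in the first $i$ levels holds an answer), and $\lambda_i=\phi_{i-1}-\phi_i$ for $i\ge1$ (the probability that the first answer is at level $i$). *)

theory Defs
  imports "HOL-Analysis.Analysis"
begin

definition tfun :: "nat \<Rightarrow> (nat \<Rightarrow> real) \<Rightarrow> nat \<Rightarrow> real \<Rightarrow> real" where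
  "tfun d c n x = (\<Sum>j=0..d. c j * x ^ j * (1 - 1 / real n) ^ j)"

fun phi :: "nat \<Rightarrow> (nat \<Rightarrow> real) \<Rightarrow> nat \<Rightarrow> nat \<Rightarrow> real" where
  "phi d c n 0 = 1"
| "phi d c n (Suc i) = tfun d c n (phi d c n i)"

definition lam :: "nat \<Rightarrow> (nat \<Rightarrow> real) \<Rightarrow> nat \<Rightarrow> nat \<Rightarrow> real" where
  "lam d c n i = phi d c n (i - 1) - phi d c n i"

end

theory Submission
  imports Defs
begin

lemma pow_diff_bounds:
  fixes a b :: real
  assumes "0 \<le> b" "b \<le> a"
  shows "real j * b^(j-1) * (a-b) \<le> a^j - b^j \<and> a^j - b^j \<le> real j * a^(j-1) * (a-b)"
proof -
  have eq: "a^j - b^j = (a - b) * (\<Sum>i<j. b^(j - Suc i) * a^i)" by (rule power_diff_sumr2)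
  have lo: "(\<Sum>i<j. b^(j-1)) \<le> (\<Sum>i<j. b^(j - Suc i) * a^i)"
  proof (rule sum_mono)
    fix i assume "i \<in> {..<j}"
    hence "b^(j-1) = b^(j - Suc i) * b^i" by (simp add: power_add[symmetric])
    also have "\<dots> \<le> b^(j - Suc i) * a^i"
      using assms by (intro mult_left_mono power_mono) auto
    finally show "b^(j-1) \<le> b^(j - Suc i) * a^i" .
  qed
  have hi: "(\<Sum>i<j. b^(j - Suc i) * a^i) \<le> (\<Sum>i<j. a^(j-1))"
  proof (rule sum_mono)
    fix i assume "i \<in> {..<j}"
    hence "a^(j-1) = a^(j - Suc i) * a^i" by (simp add: power_add[symmetric])
    moreover have "b^(j - Suc i) * a^i \<le> a^(j - Suc i) * a^i"
      using assms by (intro mult_right_mono power_mono) auto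
    ultimately show "b^(j - Suc i) * a^i \<le> a^(j-1)" by simp
  qed
  have ab: "0 \<le> a - b" using assms by simp
  show ?thesis
    using mult_left_mono[OF lo ab] mult_left_mono[OF hi ab] unfolding eq
    by (simp add: mult.commute mult.left_commute)
qed

lemma tfun_deriv:
  "(tfun d c n has_real_derivative (\<Sum>j=0..d. c j * (1 - 1 / real n) ^ j * (real j * x^(j-1)))) (at x)"
proof -
  have "((\<lambda>x. \<Sum>j=0..d. c j * (1 - 1 / real n) ^ j * x ^ j) has_real_derivative
     (\<Sum>j=0..d. c j * (1 - 1 / real n) ^ j * (real j * x^(j-1)))) (at x)"
    by (intro DERIV_sum DERIV_cmult) (simp add: DERIV_pow)
  moreover have "(\<lambda>x. \<Sum>j=0..d. c j * (1 - 1 / real n) ^ j * x ^ j) = tfun d c n"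
    by (auto simp: tfun_def fun_eq_iff mult_ac)
  ultimately show ?thesis by simp
qed

declare phi.simps(2)[simp del]

theorem proposition3p2:
  fixes d :: nat and c :: "nat \<Rightarrow> real" and n :: nat and i :: nat
  assumes "\<And>j. j \<le> d \<Longrightarrow> c j \<ge> 0"
    and "(\<Sum>j=0..d. c j) = 1"
    and "n \<ge> 1"
    and "i \<ge> 1"
  shows "lam d c n (i + 1) / lam d c n i
           \<in> {deriv (tfun d c n) (phi d c n i) .. deriv (tfun d c n) (phi d c n (i - 1))}"
proof -
  define q where "q = 1 - 1 / real n"
  define T where "T = tfun d c n"
  define D where "D x = (\<Sum>j=0..d. c j * q ^ j * (real j * x^(j-1)))" for x
  have q0: "0 \<le> q" and q1: "q \<le> 1" using assms(3) by (auto simp: q_def field_simps)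
  have cq: "0 \<le> c j * q^j" if "j \<le> d" for j using assms(1)[OF that] q0 by simp
  have dT: "deriv T x = D x" for x
    unfolding T_def D_def q_def by (rule DERIV_imp_deriv[OF tfun_deriv])
  have Tx: "T x = (\<Sum>j=0..d. c j * q ^ j * x^j)" for x
    by (simp add: T_def tfun_def q_def mult_ac)
  have Tdiff: "T a - T b = (\<Sum>j=0..d. c j * q ^ j * (a^j - b^j))" for a b
    by (simp add: Tx sum_subtractf[symmetric] algebra_simps)
  have Dnn: "0 \<le> D x" if "0 \<le> x" for x
    unfolding D_def using cq that by (intro sum_nonneg) auto
  have F1: "D b * (a - b) \<le> T a - T b \<and> T a - T b \<le> D a * (a - b)" if "0 \<le> b" "b \<le> a" for a b
  proof
    show "D b * (a - b) \<le> T a - T b" unfolding Tdiff D_def sum_distrib_right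
    proof (intro sum_mono)
      fix j assume "j \<in> {0..d}"
      hence "c j * q^j * (real j * b^(j-1) * (a-b)) \<le> c j * q^j * (a^j - b^j)"
        using pow_diff_bounds[OF that, of j] cq[of j] by (intro mult_left_mono) auto
      thus "c j * q ^ j * (real j * b ^ (j - 1)) * (a - b) \<le> c j * q ^ j * (a ^ j - b ^ j)"
        by (simp add: mult.assoc)
    qed
    show "T a - T b \<le> D a * (a - b)" unfolding Tdiff D_def sum_distrib_right
    proof (intro sum_mono)
      fix j assume "j \<in> {0..d}"
      hence "c j * q^j * (a^j - b^j) \<le> c j * q^j * (real j * a^(j-1) * (a-b))"
        using pow_diff_bounds[OF that, of j] cq[of j] by (intro mult_left_mono) auto
      thus "c j * q ^ j * (a ^ j - b ^ j) \<le> c j * q ^ j * (real j * a ^ (j - 1)) * (a - b)"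
        by (simp add: mult.assoc)
    qed
  qed
  have F2: "0 \<le> T x \<and> T x \<le> 1" if "0 \<le> x" "x \<le> 1" for x
  proof
    show "0 \<le> T x" unfolding Tx using cq that by (intro sum_nonneg) auto
    have "T x \<le> (\<Sum>j=0..d. c j)" unfolding Tx
    proof (intro sum_mono)
      fix j assume j: "j \<in> {0..d}"
      have "q^j * x^j \<le> 1" using q0 q1 that
        by (metis mult_le_one power_le_one zero_le_power)
      thus "c j * q ^ j * x^j \<le> c j"
        using assms(1)[of j] j mult_left_mono[of "q^j * x^j" 1 "c j"] by (auto simp: mult.assoc)
    qed
    thus "T x \<le> 1" using assms(2) by simp
  qed
  have phiT: "phi d c n (Suc k) = T (phi d c n k)" for k by (simp add: T_def phi.simps(2))
  have F3: "0 \<le> phi d c n k \<and> phi d c n k \<le> 1" for k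
    by (induction k) (auto simp del: phi.simps simp: phiT F2 phi.simps(1))
  have F4: "phi d c n (Suc k) \<le> phi d c n k" for k
  proof (induction k)
    case 0 then show ?case using F2[of 1] by (simp del: phi.simps add: phiT phi.simps(1))
  next
    case (Suc k)
    have "0 \<le> D (phi d c n (Suc k)) * (phi d c n k - phi d c n (Suc k))"
      using Suc F3[of "Suc k"] Dnn[of "phi d c n (Suc k)"] by simp
    also have "\<dots> \<le> T (phi d c n k) - T (phi d c n (Suc k))"
      using F1 Suc F3 by blast
    finally show ?case by (simp del: phi.simps add: phiT phi.simps(1))
  qed
  obtain k where k: "i = Suc k" using assms(4) by (cases i) auto
  define a where "a = phi d c n k"
  define b where "b = phi d c n (Suc k)"
  have b0: "0 \<le> b" and ba: "b \<le> a" using F3 F4 by (auto simp: a_def b_def)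
  have lamI: "lam d c n i = a - b" by (simp add: lam_def k a_def b_def)
  have lamI1: "lam d c n (i+1) = T a - T b" by (simp del: phi.simps add: lam_def k a_def b_def phiT)
  have goal: "(T a - T b) / (a - b) \<in> {D b .. D a}"
  proof (cases "\<forall>j\<in>{1..d}. c j * q^j = 0")
    case True
    have D0: "D x = 0" for x unfolding D_def
      by (rule sum.neutral) (use True in \<open>auto simp: not_le\<close>)
    have "T a - T b = 0" using F1[OF b0 ba] D0[of a] D0[of b] by simp
    then show ?thesis using D0 by simp
  next
    case False
    then obtain j where j: "1 \<le> j" "j \<le> d" "c j * q^j \<noteq> 0" by auto
    have pos: "0 < c j * q^j" using cq[OF j(2)] j(3) by linarith
    have strict: "T x - T y > 0" if "0 \<le> y" "y < x" for x y
    proof -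
      have "0 < c j * q ^ j * (x^j - y^j)"
        using pos that j(1) power_strict_mono[of y x j] by simp
      also have "\<dots> \<le> T x - T y" unfolding Tdiff
        using j cq that assms(1) q0
        by (intro member_le_sum) (auto intro!: mult_nonneg_nonneg power_mono)
      finally show ?thesis .
    qed
    have T1: "T 1 < 1"
    proof -
      have "T 1 < (\<Sum>j=0..d. c j)" unfolding Tx
      proof (rule sum_strict_mono_ex1)
        show "\<forall>x\<in>{0..d}. c x * q ^ x * 1 ^ x \<le> c x"
          using assms(1) q0 q1 by (auto intro!: mult_right_le_one_le power_le_one)
        have "q < 1" using assms(3) by (simp add: q_def)
        hence "q^j < 1" using q0 j(1) by (simp add: power_less_one_iff)
        moreover have cj: "0 < c j" using pos assms(1)[OF j(2)] by (cases "c j = 0") auto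
        ultimately have "c j * q^j < c j" using mult_strict_left_mono[of "q^j" 1 "c j"] by simp
        thus "\<exists>a\<in>{0..d}. c a * q ^ a * 1 ^ a < c a" using j by auto
      qed auto
      thus ?thesis using assms(2) by simp
    qed
    have F5: "phi d c n (Suc m) < phi d c n m" for m
    proof (induction m)
      case 0 then show ?case using T1 by (simp del: phi.simps add: phiT phi.simps(1))
    next
      case (Suc m)
      show ?case using strict[of "phi d c n (Suc m)" "phi d c n m"] Suc F3[of "Suc m"]
        by (simp del: phi.simps add: phiT phi.simps(1))
    qed
    have ab: "0 < a - b" using F5[of k] by (simp add: a_def b_def)
    show ?thesis using F1[OF b0 ba] ab by (simp add: pos_le_divide_eq pos_divide_le_eq)
  qed
  show ?thesis using goal unfolding lamI lamI1 dT[symmetric] T_def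
    by (simp add: a_def b_def k)
qed

end
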